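(* For all positive integers $n,m$ with $m$ even, there is a deterministic query algorithm which, given an index $j\in[m]$ and query access to an input $x\in\Sigma^M$, makes $\tilde O(n+m)$ queries and accepts if and only if column $j$ is good for $x$, i.e., $g_{n,m}(x)=1$ and $j$ belongs to the set $G$ of condition (4') for $x$.
   Context: Let $n,m$ be positive integers with $m$ even, $M=[n]\times[m]$ (a grid of cells with $n$ rows and $m$ columns), $\tilde M = M\cup\{\bot\}$ (pointers to cells, $\bot$ is the null pointer). Let $T$ be the following fixed binary tree with $m$ leaves and $m-1$ internal nodes: if $m=2^k$, $T$ is the complete binary tree with $2^k$ leaves; if $2^k<m<2^{k+1}$, take the complete binary tree with $2^k$ leaves and add a pair of children to each of its $m-2^k$ leftmost leaves. Outgoing arcs of internal nodes are labeled 'left' and 'right', leaves are labeled $1,\dots,m$ from left to right, and $T(j)$ is the sequence of 'left'/'right' labels on the root-to-leaf-$j$ path. The input alphabet is $\Sigma=\{0,1\}\times\tilde M\times\tilde M\times\tilde M$; for $v\in\Sigma$ its components are $\mathrm{val}(v),\mathrm{lpoint}(v),\mathrm{rpoint}(v),\mathrm{bpoint}(v)$. The function $g_{n,m}\colon\Sigma^M\to\{0,1\}$ is defined by $g_{n,m}(x)=1$ iff: (1) there is exactly one column $b\in[m]$ with $\mathrm{val}(x_{i,b})=1$ for all $i\in[n]$ (the marked column); (2) in column $b$ there is a unique cell $a$ with $x_a\ne(1,\bot,\bot,\bot)$ (the special element); (3) for each column $j\in[m]\setminus\{b\}$, the path starting at $a$ and following $\mathrm{lpoint},\mathrm{rpoint}$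 as specified by $T(j)$ exists (no pointer on it is $\bot$) and ends in a cell $\ell_j$ in column $j$ with $\mathrm{val}(x_{\ell_j})=0$; (4') the set $G=\{j\in[m]\setminus\{b\} : \mathrm{bpoint}(x_{\ell_j})=a\}$ has size exactly $m/2$. A query returns the symbol $x_c\in\Sigma$ of one cell $c\in M$. $\tilde O$ hides factors polylogarithmic in $n,m$. *)

theory Defs
  imports Complex_Main
begin

type_synonym cell = "nat \<times> nat"   (* (row, column), rows in [n], columns in [m] *)
type_synonym ptr = "cell option"     (* None = the null pointer \<bottom> *)
type_synonym sym = "bool \<times> ptr \<times> ptr \<times> ptr"  (* val (True = 1), lpoint, rpoint, bpoint *)

definition grid :: "nat \<Rightarrow> nat \<Rightarrow> cell set" where
  "grid n m = {1..n} \<times> {1..m}"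

definition val :: "sym \<Rightarrow> bool" where "val v = fst v"
definition lpoint :: "sym \<Rightarrow> ptr" where "lpoint v = fst (snd v)"
definition rpoint :: "sym \<Rightarrow> ptr" where "rpoint v = fst (snd (snd v))"
definition bpoint :: "sym \<Rightarrow> ptr" where "bpoint v = snd (snd (snd v))"

text \<open>A symbol of \<Sigma> = {0,1} \<times> M~ \<times> M~ \<times> M~ : all pointers are null or point into M.\<close>
definition valid_sym :: "nat \<Rightarrow> nat \<Rightarrow> sym \<Rightarrow> bool" where
  "valid_sym n m v \<longleftrightarrow>
     (\<forall>c. lpoint v = Some c \<longrightarrow> c \<in> grid n m) \<and>
     (\<forall>c. rpoint v = Some c \<longrightarrow> c \<in> grid n m) \<and>
     (\<forall>c. bpoint v = Some c \<longrightarrow> c \<in> grid n m)"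

text \<open>Inputs x \<in> \<Sigma>^M (values outside M are irrelevant).\<close>
definition valid_input :: "nat \<Rightarrow> nat \<Rightarrow> (cell \<Rightarrow> sym) \<Rightarrow> bool" where
  "valid_input n m x \<longleftrightarrow> (\<forall>c \<in> grid n m. valid_sym n m (x c))"

datatype btree = Lf | Nd btree btree

text \<open>Complete binary tree of depth k whose r leftmost leaves get a pair of children.\<close>
fun ctree :: "nat \<Rightarrow> nat \<Rightarrow> btree" where
  "ctree 0 r = (if r > 0 then Nd Lf Lf else Lf)"
| "ctree (Suc k) r = Nd (ctree k (min r (2^k))) (ctree k (r - 2^k))"

definition tdepth :: "nat \<Rightarrow> nat" where
  "tdepth m = (GREATEST k. 2^k \<le> m)"

definition Ttree :: "nat \<Rightarrow> btree" where
  "Ttree m = ctree (tdepth m) (m - 2 ^ tdepth m)"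

text \<open>Root-to-leaf paths listed by leaves from left to right; False = 'left', True = 'right'.\<close>
fun leaf_paths :: "btree \<Rightarrow> bool list list" where
  "leaf_paths Lf = [[]]"
| "leaf_paths (Nd l r) = map (Cons False) (leaf_paths l) @ map (Cons True) (leaf_paths r)"

text \<open>T(j) for leaf j \<in> [m] (leaves labelled 1..m from left to right).\<close>
definition Tpath :: "nat \<Rightarrow> nat \<Rightarrow> bool list" where
  "Tpath m j = leaf_paths (Ttree m) ! (j - 1)"

fun follow :: "(cell \<Rightarrow> sym) \<Rightarrow> cell \<Rightarrow> bool list \<Rightarrow> cell option" where
  "follow x a [] = Some a"
| "follow x a (d # ds) =
     (case (if d then rpoint (x a) else lpoint (x a)) of
        None \<Rightarrow> None
      | Some c \<Rightarrow> follow x c ds)"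

definition marked_col :: "nat \<Rightarrow> (cell \<Rightarrow> sym) \<Rightarrow> nat \<Rightarrow> bool" where
  "marked_col n x b \<longleftrightarrow> (\<forall>i\<in>{1..n}. val (x (i, b)))"

definition Gset :: "nat \<Rightarrow> (cell \<Rightarrow> sym) \<Rightarrow> nat \<Rightarrow> cell \<Rightarrow> nat set" where
  "Gset m x b a = {j \<in> {1..m} - {b}.
      bpoint (x (the (follow x a (Tpath m j)))) = Some a}"

text \<open>Conditions (1),(2),(3),(4') with marked column b and special element a.\<close>
definition g_conds :: "nat \<Rightarrow> nat \<Rightarrow> (cell \<Rightarrow> sym) \<Rightarrow> nat \<Rightarrow> cell \<Rightarrow> bool" where
  "g_conds n m x b a \<longleftrightarrow>
     b \<in> {1..m} \<and> marked_col n x b \<and>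
     (\<forall>b'\<in>{1..m}. marked_col n x b' \<longrightarrow> b' = b) \<and>
     a \<in> {1..n} \<times> {b} \<and> x a \<noteq> (True, None, None, None) \<and>
     (\<forall>a'\<in>{1..n} \<times> {b}. x a' \<noteq> (True, None, None, None) \<longrightarrow> a' = a) \<and>
     (\<forall>j\<in>{1..m} - {b}. \<exists>l. follow x a (Tpath m j) = Some l \<and> snd l = j \<and> \<not> val (x l)) \<and>
     card (Gset m x b a) = m div 2"

definition g :: "nat \<Rightarrow> nat \<Rightarrow> (cell \<Rightarrow> sym) \<Rightarrow> bool" where
  "g n m x \<longleftrightarrow> (\<exists>b a. g_conds n m x b a)"

text \<open>Column j is good: g(x) = 1 and j \<in> G (b, a are unique when g_conds holds).\<close>
definition good_col :: "nat \<Rightarrow> nat \<Rightarrow> (cell \<Rightarrow> sym) \<Rightarrow> nat \<Rightarrow> bool" where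
  "good_col n m x j \<longleftrightarrow> (\<exists>b a. g_conds n m x b a \<and> j \<in> Gset m x b a)"

datatype qalg = Accept bool | Query cell "sym \<Rightarrow> qalg"

primrec run :: "qalg \<Rightarrow> (cell \<Rightarrow> sym) \<Rightarrow> bool" where
  "run (Accept b) = (\<lambda>x. b)"
| "run (Query c f) = (\<lambda>x. run (f (x c)) x)"

primrec nqueries :: "qalg \<Rightarrow> (cell \<Rightarrow> sym) \<Rightarrow> nat" where
  "nqueries (Accept b) = (\<lambda>x. 0)"
| "nqueries (Query c f) = (\<lambda>x. Suc (nqueries (f (x c)) x))"

primrec queries_in :: "cell set \<Rightarrow> qalg \<Rightarrow> (cell \<Rightarrow> sym) \<Rightarrow> bool" where
  "queries_in S (Accept b) = (\<lambda>x. True)"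
| "queries_in S (Query c f) = (\<lambda>x. c \<in> S \<and> queries_in S (f (x c)) x)"

end

theory Submission
  imports Defs
begin


datatype 'a qm = Ret 'a | Q cell "sym \<Rightarrow> 'a qm"

primrec ev :: "'a qm \<Rightarrow> (cell \<Rightarrow> sym) \<Rightarrow> 'a" where
  "ev (Ret v) x = v"
| "ev (Q c f) x = ev (f (x c)) x"

primrec cst :: "'a qm \<Rightarrow> (cell \<Rightarrow> sym) \<Rightarrow> nat" where
  "cst (Ret v) x = 0"
| "cst (Q c f) x = Suc (cst (f (x c)) x)"

primrec qin :: "cell set \<Rightarrow> 'a qm \<Rightarrow> (cell \<Rightarrow> sym) \<Rightarrow> bool" where
  "qin S (Ret v) x = True"
| "qin S (Q c f) x = (c \<in> S \<and> qin S (f (x c)) x)"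

primrec bnd :: "'a qm \<Rightarrow> ('a \<Rightarrow> 'b qm) \<Rightarrow> 'b qm" where
  "bnd (Ret v) h = h v"
| "bnd (Q c f) h = Q c (\<lambda>s. bnd (f s) h)"

primrec toq :: "bool qm \<Rightarrow> qalg" where
  "toq (Ret b) = Accept b"
| "toq (Q c f) = Query c (\<lambda>s. toq (f s))"

lemma toq_props: "run (toq p) x = ev p x" "nqueries (toq p) x = cst p x"
  "queries_in S (toq p) x = qin S p x"
  by (induction p) auto

lemma bnd_props [simp]: "ev (bnd p h) x = ev (h (ev p x)) x"
  "cst (bnd p h) x = cst p x + cst (h (ev p x)) x"
  "qin S (bnd p h) x = (qin S p x \<and> qin S (h (ev p x)) x)"
  by (induction p) auto

definition query :: "cell \<Rightarrow> sym qm" where "query c = Q c Ret"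

lemma query_props [simp]: "ev (query c) x = x c" "cst (query c) x = 1" "qin S (query c) x = (c \<in> S)"
  by (auto simp: query_def)

fun qfollow :: "cell \<Rightarrow> bool list \<Rightarrow> cell option qm" where
  "qfollow a [] = Ret (Some a)"
| "qfollow a (d # ds) = bnd (query a) (\<lambda>s. case (if d then rpoint s else lpoint s) of
      None \<Rightarrow> Ret None | Some c \<Rightarrow> qfollow c ds)"

lemma valid_ptr: "valid_input n m x \<Longrightarrow> a \<in> grid n m \<Longrightarrow>
   (if d then rpoint (x a) else lpoint (x a)) = Some c \<Longrightarrow> c \<in> grid n m"
  unfolding valid_input_def valid_sym_def by (cases d) (metis, metis)

lemma follow_grid: "valid_input n m x \<Longrightarrow> a \<in> grid n m \<Longrightarrow> follow x a p = Some l \<Longrightarrow> l \<in> grid n m"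
proof (induction p arbitrary: a)
  case Nil then show ?case by simp
next
  case (Cons d ds)
  then show ?case
    by (auto split: option.splits if_splits dest: valid_ptr[where d=True] valid_ptr[where d=False])
qed

lemma qfollow_props:
  "ev (qfollow a p) x = follow x a p"
  "cst (qfollow a p) x \<le> length p"
  "valid_input n m x \<Longrightarrow> a \<in> grid n m \<Longrightarrow> qin (grid n m) (qfollow a p) x"
proof (induction p arbitrary: a)
  case Nil
  { case 1 then show ?case by simp }
  { case 2 then show ?case by simp }
  { case 3 then show ?case by simp }
next
  case (Cons d ds)
  { case 1 then show ?case using Cons by (auto split: option.splits) }
  { case 2 then show ?case using Cons by (auto split: option.splits) }
  { case 3 then show ?case using Cons
    by (auto split: option.splits if_splits dest: valid_ptr[where d=True] valid_ptr[where d=False]) }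
qed

fun qmap :: "('k \<Rightarrow> 'v qm) \<Rightarrow> 'k list \<Rightarrow> 'v list qm" where
  "qmap f [] = Ret []"
| "qmap f (y # ys) = bnd (f y) (\<lambda>v. bnd (qmap f ys) (\<lambda>vs. Ret (v # vs)))"

lemma qmap_props [simp]:
  "ev (qmap f ys) x = map (\<lambda>y. ev (f y) x) ys"
  "cst (qmap f ys) x = sum_list (map (\<lambda>y. cst (f y) x) ys)"
  "qin S (qmap f ys) x = (\<forall>y\<in>set ys. qin S (f y) x)"
  by (induction ys) auto

definition qtab :: "('k \<Rightarrow> 'v qm) \<Rightarrow> 'k list \<Rightarrow> ('k \<Rightarrow> 'v option) qm" where
  "qtab f ks = bnd (qmap f ks) (\<lambda>vs. Ret (map_of (zip ks vs)))"

lemma qtab_props [simp]: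
  "ev (qtab f ks) x = (\<lambda>k. if k \<in> set ks then Some (ev (f k) x) else None)"
  "cst (qtab f ks) x = sum_list (map (\<lambda>y. cst (f y) x) ks)"
  "qin S (qtab f ks) x = (\<forall>y\<in>set ks. qin S (f y) x)"
  by (auto simp: qtab_def map_of_zip_map)

fun qfoldl :: "('s \<Rightarrow> 'k \<Rightarrow> 's qm) \<Rightarrow> 's \<Rightarrow> 'k list \<Rightarrow> 's qm" where
  "qfoldl f s [] = Ret s"
| "qfoldl f s (y # ys) = bnd (f s y) (\<lambda>s'. qfoldl f s' ys)"

lemma qfoldl_ev [simp]: "ev (qfoldl f s ys) x = foldl (\<lambda>s y. ev (f s y) x) s ys"
  by (induction ys arbitrary: s) auto

lemma qfoldl_props:
  assumes "\<And>st d. I st \<Longrightarrow> d \<in> set ds \<Longrightarrow> I (ev (f st d) x) \<and> cst (f st d) x \<le> K \<and> qin S (f st d) x"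
  and "I st"
  shows "cst (qfoldl f st ds) x \<le> K * length ds \<and> qin S (qfoldl f st ds) x"
  using assms
proof (induction ds arbitrary: st)
  case Nil then show ?case by simp
next
  case (Cons d ds)
  have h: "I (ev (f st d) x)" "cst (f st d) x \<le> K" "qin S (f st d) x" using Cons.prems by auto
  have "cst (qfoldl f (ev (f st d) x) ds) x \<le> K * length ds \<and> qin S (qfoldl f (ev (f st d) x) ds) x"
    by (rule Cons.IH) (use Cons.prems h in auto)
  then show ?case using h by auto
qed



fun ht :: "btree \<Rightarrow> nat" where
  "ht Lf = 0" | "ht (Nd l r) = Suc (max (ht l) (ht r))"

lemma leaf_paths_len: "p \<in> set (leaf_paths t) \<Longrightarrow> length p \<le> ht t"
  by (induction t arbitrary: p) fastforce+

lemma ctree_ht: "ht (ctree k r) \<le> Suc k"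
  by (induction k arbitrary: r) (auto simp: max_def)

lemma ctree_leaves: "length (leaf_paths (ctree k r)) = 2^k + min r (2^k)"
  by (induction k arbitrary: r) (auto simp: min_def)

lemma tdepth_props: assumes "m \<ge> 1" shows "2 ^ tdepth m \<le> m" "m < 2 ^ Suc (tdepth m)"
proof -
  have bnd: "\<And>y. (2::nat)^y \<le> m \<Longrightarrow> y \<le> m"
  proof -
    fix y :: nat assume "(2::nat)^y \<le> m"
    moreover have "y < 2^y" by (rule less_exp)
    ultimately show "y \<le> m" by linarith
  qed
  have p0: "(2::nat)^0 \<le> m" using assms by simp
  show "2 ^ tdepth m \<le> m" unfolding tdepth_def
    by (rule GreatestI_nat[of "\<lambda>k. (2::nat)^k \<le> m", OF p0 bnd])
  show "m < 2 ^ Suc (tdepth m)"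
  proof (rule ccontr)
    assume "\<not> ?thesis"
    then have "(2::nat) ^ Suc (tdepth m) \<le> m" by (simp only: not_less)
    then have "Suc (tdepth m) \<le> tdepth m" unfolding tdepth_def
      by (rule Greatest_le_nat[of "\<lambda>k. (2::nat)^k \<le> m", OF _ bnd])
    then show False by simp
  qed
qed

lemma Tpath_len: assumes "j \<in> {1..m}" shows "length (Tpath m j) \<le> Suc (tdepth m)"
proof -
  have m: "m \<ge> 1" using assms by auto
  have "length (leaf_paths (Ttree m)) = m"
    using tdepth_props[OF m] unfolding Ttree_def ctree_leaves by (auto simp: min_def)
  then have "Tpath m j \<in> set (leaf_paths (Ttree m))" unfolding Tpath_def using assms by auto
  then have "length (Tpath m j) \<le> ht (Ttree m)" by (rule leaf_paths_len)
  also have "\<dots> \<le> Suc (tdepth m)" unfolding Ttree_def by (rule ctree_ht)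
  finally show ?thesis .
qed

lemma tdepth_log: assumes "m \<ge> 1" "m \<le> N" shows "real (tdepth m) \<le> log 2 (real N)"
proof -
  have "(2::real) ^ tdepth m \<le> real N" using tdepth_props(1)[OF assms(1)] assms(2)
    by (metis of_nat_le_iff of_nat_numeral of_nat_power order_trans)
  moreover have "real N > 0" using assms by auto
  ultimately have "log 2 ((2::real) ^ tdepth m) \<le> log 2 (real N)"
    by (subst log_le_cancel_iff) auto
  then show ?thesis by (simp add: log_nat_power)
qed



abbreviation dflt :: sym where "dflt \<equiv> (True, None, None, None)"

definition cmp :: "nat \<Rightarrow> cell option \<Rightarrow> cell \<Rightarrow> cell option qm" where
  "cmp m st d = bnd (query d) (\<lambda>sd. if sd = dflt then Ret st else
     (case st of None \<Rightarrow> Ret (Some d)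
      | Some c \<Rightarrow> if c = d then Ret (Some c) else if snd c = snd d then Ret None else
          bnd (qfollow c (Tpath m (snd d))) (\<lambda>r. case r of None \<Rightarrow> Ret (Some d)
            | Some l \<Rightarrow> if snd l = snd d then bnd (query l) (\<lambda>sl. Ret (if \<not> val sl then Some c else Some d))
                        else Ret (Some d))))"

definition step :: "nat \<Rightarrow> (cell \<Rightarrow> sym) \<Rightarrow> cell option \<Rightarrow> cell \<Rightarrow> cell option" where
  "step m x st d = (if x d = dflt then st else
     (case st of None \<Rightarrow> Some d
      | Some c \<Rightarrow> if c = d then Some c else if snd c = snd d then None else
          (case follow x c (Tpath m (snd d)) of None \<Rightarrow> Some d
            | Some l \<Rightarrow> if snd l = snd d \<and> \<not> val (x l) then Some c else Some d)))"

lemma cmp_ev: "ev (cmp m st d) x = step m x st d"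
  unfolding cmp_def step_def
  by (auto simp: qfollow_props split: option.splits)

lemma cmp_cost: "cst (cmp m st d) x \<le> 2 + length (Tpath m (snd d))"
proof -
  have "cst (qfollow c (Tpath m (snd d))) x \<le> length (Tpath m (snd d))" for c by (rule qfollow_props)
  then show ?thesis unfolding cmp_def by (auto split: option.splits simp: le_SucI)
qed

lemma cmp_qin: "valid_input n m x \<Longrightarrow> d \<in> grid n m \<Longrightarrow> (\<forall>c. st = Some c \<longrightarrow> c \<in> grid n m) \<Longrightarrow>
   qin (grid n m) (cmp m st d) x \<and> (\<forall>c. step m x st d = Some c \<longrightarrow> c \<in> grid n m)"
  unfolding cmp_def step_def
  by (auto simp: qfollow_props split: option.splits dest: follow_grid)

definition inv :: "nat \<Rightarrow> nat \<Rightarrow> (cell \<Rightarrow> sym) \<Rightarrow> cell option \<Rightarrow> bool" where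
  "inv n m x st \<longleftrightarrow> (\<forall>c. st = Some c \<longrightarrow> c \<in> grid n m \<and> x c \<noteq> dflt)"

lemma step_inv: "d \<in> grid n m \<Longrightarrow> inv n m x st \<Longrightarrow> inv n m x (step m x st d)"
  unfolding inv_def step_def by (auto split: option.splits)

lemma step_keep:
  assumes gc: "g_conds n m x b a" and v: "valid_input n m x" and d: "d \<in> grid n m"
    and iv: "inv n m x st" and h: "st = Some a \<or> d = a"
  shows "step m x st d = Some a"
proof -
  have a: "a \<in> {1..n} \<times> {b}" "x a \<noteq> dflt" "b \<in> {1..m}" using gc by (auto simp: g_conds_def)
  have uniq: "\<And>a'. a' \<in> {1..n} \<times> {b} \<Longrightarrow> x a' \<noteq> dflt \<Longrightarrow> a' = a" using gc by (auto simp: g_conds_def)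
  have mk: "\<And>i. i \<in> {1..n} \<Longrightarrow> val (x (i, b))" using gc by (auto simp: g_conds_def marked_col_def)
  have path: "\<And>j. j \<in> {1..m} - {b} \<Longrightarrow> \<exists>l. follow x a (Tpath m j) = Some l \<and> snd l = j \<and> \<not> val (x l)"
    using gc by (auto simp: g_conds_def)
  show ?thesis
  proof (cases "st = Some a")
    case True
    show ?thesis
    proof (cases "x d = dflt")
      case True then show ?thesis using \<open>st = Some a\<close> by (simp add: step_def)
    next
      case nd: False
      show ?thesis
      proof (cases "d = a")
        case True then show ?thesis using \<open>st = Some a\<close> by (simp add: step_def)
      next
        case dna: False
        have "snd d \<noteq> b"
        proof
          assume "snd d = b"
          then have "d \<in> {1..n} \<times> {b}" using d by (auto simp: grid_def)
          then show False using uniq nd dna by auto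
        qed
        moreover have "snd d \<in> {1..m}" using d by (auto simp: grid_def)
        ultimately have "snd d \<in> {1..m} - {b}" by auto
        from path[OF this] obtain l where "follow x a (Tpath m (snd d)) = Some l" "snd l = snd d" "\<not> val (x l)"
          by blast
        then show ?thesis using \<open>st = Some a\<close> nd dna a \<open>snd d \<noteq> b\<close> by (auto simp: step_def)
      qed
    qed
  next
    case False
    then have da: "d = a" using h by auto
    show ?thesis
    proof (cases st)
      case None then show ?thesis using da a by (simp add: step_def)
    next
      case (Some c)
      have c: "c \<in> grid n m" "x c \<noteq> dflt" "c \<noteq> a" using iv Some False by (auto simp: inv_def)
      have "snd c \<noteq> b"
      proof
        assume "snd c = b"
        then have "c \<in> {1..n} \<times> {b}" using c by (auto simp: grid_def)
        then show False using uniq c by auto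
      qed
      moreover have "\<not> (snd l = b \<and> \<not> val (x l))" if "follow x c (Tpath m b) = Some l" for l
      proof -
        have "l \<in> grid n m" using follow_grid[OF v c(1) that] .
        then show ?thesis using mk by (auto simp: grid_def)
      qed
      ultimately show ?thesis using Some da a c
        by (auto simp: step_def split: option.splits)
    qed
  qed
qed

lemma fold_inv: "set ds \<subseteq> grid n m \<Longrightarrow> inv n m x st \<Longrightarrow> inv n m x (foldl (step m x) st ds)"
  by (induction ds arbitrary: st) (auto intro: step_inv)

lemma fold_keep:
  assumes "g_conds n m x b a" "valid_input n m x"
  shows "set ds \<subseteq> grid n m \<Longrightarrow> inv n m x st \<Longrightarrow> st = Some a \<or> a \<in> set ds \<Longrightarrow> foldl (step m x) st ds = Some a"
proof (induction ds arbitrary: st)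
  case Nil then show ?case by simp
next
  case (Cons d ds)
  show ?case
  proof (cases "st = Some a \<or> d = a")
    case True
    then have "step m x st d = Some a" using step_keep[OF assms] Cons.prems by auto
    moreover have "inv n m x (step m x st d)" using step_inv Cons.prems by auto
    ultimately show ?thesis using Cons by auto
  next
    case False
    then have "a \<in> set ds" using Cons.prems by auto
    moreover have "inv n m x (step m x st d)" using step_inv Cons.prems by auto
    ultimately show ?thesis using Cons by auto
  qed
qed



definition check :: "nat \<Rightarrow> nat \<Rightarrow> nat \<Rightarrow> cell \<Rightarrow> (cell \<Rightarrow> sym) \<Rightarrow> (nat \<Rightarrow> (cell \<times> sym) option) \<Rightarrow> bool" where
  "check n m j a X F = (let b = snd a in
    (\<forall>i\<in>{1..n}. val (X (i,b))) \<and> fst a \<in> {1..n} \<and> X a \<noteq> dflt \<and>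
    (\<forall>i\<in>{1..n}. X (i,b) \<noteq> dflt \<longrightarrow> (i,b) = a) \<and>
    (\<forall>j'\<in>{1..m}-{b}. \<exists>l s. F j' = Some (l,s) \<and> snd l = j' \<and> \<not> val s) \<and>
    card {j'\<in>{1..m}-{b}. \<exists>l s. F j' = Some (l,s) \<and> bpoint s = Some a} = m div 2 \<and>
    j \<in> {j'\<in>{1..m}-{b}. \<exists>l s. F j' = Some (l,s) \<and> bpoint s = Some a})"

definition fq :: "nat \<Rightarrow> cell \<Rightarrow> nat \<Rightarrow> (cell \<times> sym) option qm" where
  "fq m a j' = bnd (qfollow a (Tpath m j')) (\<lambda>r. case r of None \<Rightarrow> Ret None
      | Some l \<Rightarrow> bnd (query l) (\<lambda>s. Ret (Some (l, s))))"

lemma fq_ev: "ev (fq m a j') x = (case follow x a (Tpath m j') of None \<Rightarrow> None | Some l \<Rightarrow> Some (l, x l))"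
  unfolding fq_def by (auto simp: qfollow_props split: option.splits)

lemma fq_cost: "cst (fq m a j') x \<le> Suc (length (Tpath m j'))"
proof -
  have "cst (qfollow a (Tpath m j')) x \<le> length (Tpath m j')" by (rule qfollow_props)
  then show ?thesis unfolding fq_def by (auto split: option.splits)
qed

lemma fq_qin: "valid_input n m x \<Longrightarrow> a \<in> grid n m \<Longrightarrow> qin (grid n m) (fq m a j') x"
  unfolding fq_def by (auto simp: qfollow_props split: option.splits dest: follow_grid)

definition verify :: "nat \<Rightarrow> nat \<Rightarrow> nat \<Rightarrow> cell \<Rightarrow> bool qm" where
  "verify n m j a = bnd (qtab query (map (\<lambda>i. (i, snd a)) [1..<n+1])) (\<lambda>T1.
     bnd (qtab (fq m a) (filter (\<lambda>j'. j' \<noteq> snd a) [1..<m+1])) (\<lambda>T2.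
     Ret (check n m j a (\<lambda>c. the (T1 c)) (\<lambda>j'. the (T2 j')))))"

lemma case_ex: "(\<exists>l s. (case oo of None \<Rightarrow> None | Some l \<Rightarrow> Some (l, f l)) = Some (l,s) \<and> PP l s) =
   (\<exists>l. oo = Some l \<and> PP l (f l))"
  by (cases oo) auto

lemma verify_ev:
  assumes v: "valid_input n m x" and ag: "a \<in> grid n m"
  shows "ev (verify n m j a) x = (g_conds n m x (snd a) a \<and> j \<in> Gset m x (snd a) a)"
proof -
  define b where "b = snd a"
  define X where "X = (\<lambda>c. the (if c \<in> set (map (\<lambda>i. (i, b)) [1..<n+1]) then Some (x c) else None))"
  define F where "F = (\<lambda>j'. the (if j' \<in> set (filter (\<lambda>j'. j' \<noteq> b) [1..<m+1]) then Some (ev (fq m a j') x) else None))"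
  have e: "ev (verify n m j a) x = check n m j a X F"
    unfolding verify_def X_def F_def b_def by (simp add: query_props cong: if_cong)
  have X: "\<And>i. i \<in> {1..n} \<Longrightarrow> X (i,b) = x (i,b)" unfolding X_def by auto
  have F: "\<And>j'. j' \<in> {1..m}-{b} \<Longrightarrow> F j' = (case follow x a (Tpath m j') of None \<Rightarrow> None | Some l \<Rightarrow> Some (l, x l))"
    unfolding F_def by (auto simp: fq_ev)
  have bm: "b \<in> {1..m}" "fst a \<in> {1..n}" and ab: "a = (fst a, b)" using ag by (auto simp: grid_def b_def)
  define P3 where "P3 = (\<forall>j'\<in>{1..m}-{b}. \<exists>l. follow x a (Tpath m j') = Some l \<and> snd l = j' \<and> \<not> val (x l))"
  define S where "S = {j'\<in>{1..m}-{b}. \<exists>l s. F j' = Some (l,s) \<and> bpoint s = Some a}"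
  have P3eq: "(\<forall>j'\<in>{1..m}-{b}. \<exists>l s. F j' = Some (l,s) \<and> snd l = j' \<and> \<not> val s) = P3"
    unfolding P3_def by (rule ball_cong[OF refl]) (simp only: F case_ex)
  have Geq: "S = Gset m x b a" if p: P3
    unfolding S_def Gset_def
  proof (rule Collect_cong)
    fix j'
    show "(j' \<in> {1..m}-{b} \<and> (\<exists>l s. F j' = Some (l,s) \<and> bpoint s = Some a)) =
          (j' \<in> {1..m}-{b} \<and> bpoint (x (the (follow x a (Tpath m j')))) = Some a)"
    proof (cases "j' \<in> {1..m}-{b}")
      case True
      then obtain l where "follow x a (Tpath m j') = Some l" using p unfolding P3_def by blast
      then show ?thesis using True F[OF True] by simp
    qed blast
  qed
  have unq: "P3 \<Longrightarrow> (\<forall>b'\<in>{1..m}. marked_col n x b' \<longrightarrow> b' = b)"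
  proof (intro ballI impI; rule ccontr)
    fix b' assume p: P3 and b': "b' \<in> {1..m}" "marked_col n x b'" "b' \<noteq> b"
    then obtain l where l: "follow x a (Tpath m b') = Some l" "snd l = b'" "\<not> val (x l)"
      unfolding P3_def by blast
    have "l \<in> grid n m" using follow_grid[OF v ag l(1)] .
    then have "fst l \<in> {1..n}" "l = (fst l, b')" using l by (auto simp: grid_def)
    then show False using b' l unfolding marked_col_def by metis
  qed
  have Xa: "X a = x a" using X bm ab by metis
  define A1 where "A1 = (\<forall>i\<in>{1..n}. val (x (i,b)))"
  define A2 where "A2 = (\<forall>i\<in>{1..n}. x (i,b) \<noteq> dflt \<longrightarrow> (i,b) = a)"
  have e1: "(\<forall>i\<in>{1..n}. val (X (i,b))) = A1" unfolding A1_def using X by simp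
  have e2: "(\<forall>i\<in>{1..n}. X (i,b) \<noteq> dflt \<longrightarrow> (i,b) = a) = A2" unfolding A2_def using X by simp
  have ck: "check n m j a X F = (A1 \<and> x a \<noteq> dflt \<and> A2 \<and> P3 \<and> card S = m div 2 \<and> j \<in> S)"
    unfolding check_def Let_def b_def[symmetric] e1 e2 P3eq Xa S_def using bm(2) by blast
  have mc: "marked_col n x b = A1" unfolding marked_col_def A1_def ..
  have ua: "(\<forall>a'\<in>{1..n} \<times> {b}. x a' \<noteq> dflt \<longrightarrow> a' = a) = A2" unfolding A2_def by auto
  have ain: "a \<in> {1..n} \<times> {b}" using bm ab by (metis mem_Sigma_iff singletonI)
  have gc: "g_conds n m x b a = (marked_col n x b \<and> (\<forall>b'\<in>{1..m}. marked_col n x b' \<longrightarrow> b' = b) \<and>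
      x a \<noteq> dflt \<and> A2 \<and> P3 \<and> card (Gset m x b a) = m div 2)"
    unfolding g_conds_def P3_def ua using bm(1) ain by blast
  show ?thesis
  proof
    assume "ev (verify n m j a) x"
    then have c: "A1 \<and> x a \<noteq> dflt \<and> A2 \<and> P3 \<and> card S = m div 2 \<and> j \<in> S" using e ck by simp
    then have p: P3 by blast
    have "g_conds n m x b a" unfolding gc mc using c unq[OF p] unfolding Geq[OF p] by blast
    moreover have "j \<in> Gset m x b a" using c unfolding Geq[OF p] by blast
    ultimately show "g_conds n m x (snd a) a \<and> j \<in> Gset m x (snd a) a" unfolding b_def by simp
  next
    assume h: "g_conds n m x (snd a) a \<and> j \<in> Gset m x (snd a) a"
    then have h1: "g_conds n m x b a" and h2: "j \<in> Gset m x b a" unfolding b_def by auto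
    then have p: P3 unfolding gc by blast
    have "A1 \<and> x a \<noteq> dflt \<and> A2 \<and> P3 \<and> card S = m div 2 \<and> j \<in> S"
      using h1 h2 unfolding gc mc Geq[OF p] by blast
    then show "ev (verify n m j a) x" using e ck by simp
  qed
qed



definition cands :: "nat \<Rightarrow> sym list \<Rightarrow> cell list" where
  "cands n col = map (\<lambda>s. the (bpoint s)) (filter (\<lambda>s. bpoint s \<noteq> None) col)"

definition fin :: "nat \<Rightarrow> nat \<Rightarrow> nat \<Rightarrow> cell option \<Rightarrow> bool qm" where
  "fin n m j ch = (case ch of None \<Rightarrow> Ret False | Some a \<Rightarrow> verify n m j a)"

definition rest :: "nat \<Rightarrow> nat \<Rightarrow> nat \<Rightarrow> sym list \<Rightarrow> bool qm" where
  "rest n m j col = bnd (qfoldl (cmp m) None (cands n col)) (fin n m j)"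

definition alg :: "nat \<Rightarrow> nat \<Rightarrow> nat \<Rightarrow> bool qm" where
  "alg n m j = bnd (qmap query (map (\<lambda>i. (i, j)) [1..<n+1])) (rest n m j)"

lemma verify_qin: assumes "valid_input n m x" "a \<in> grid n m"
  shows "qin (grid n m) (verify n m j a) x"
proof -
  have "(i, snd a) \<in> grid n m" if "i \<in> {1..n}" for i using assms(2) that by (auto simp: grid_def)
  then show ?thesis unfolding verify_def using fq_qin[OF assms]
    by (simp add: query_props del: upt_Suc)
qed

lemma sl1: "(\<Sum>y\<leftarrow>xs. (1::nat)) = length xs"
  by (induction xs) auto

lemma qmap_query_cst: "cst (qmap query cs) x = length cs"
  by (induction cs) (auto simp: query_props)

lemma verify_cost0: "cst (verify n m j a) x = n + sum_list (map (\<lambda>y. cst (fq m a y) x) (filter (\<lambda>j'. j' \<noteq> snd a) [1..<m+1]))"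
  unfolding verify_def qtab_def bnd_props qmap_query_cst by (simp del: upt_Suc)

lemma verify_cost: assumes "a \<in> grid n m"
  shows "cst (verify n m j a) x \<le> n + m * (Suc (Suc (tdepth m)))"
proof -
  have "sum_list (map (\<lambda>y. cst (fq m a y) x) (filter (\<lambda>j'. j' \<noteq> snd a) [1..<m+1]))
      \<le> sum_list (map (\<lambda>y. Suc (Suc (tdepth m))) (filter (\<lambda>j'. j' \<noteq> snd a) [1..<m+1]))"
  proof (rule sum_list_mono)
    fix y assume "y \<in> set (filter (\<lambda>j'. j' \<noteq> snd a) [1..<m+1])"
    then have "y \<in> {1..m}" by auto
    then show "cst (fq m a y) x \<le> Suc (Suc (tdepth m))"
      using fq_cost[of m a y x] Tpath_len[of y m] by linarith
  qed
  also have "\<dots> = length (filter (\<lambda>j'. j' \<noteq> snd a) [1..<m+1]) * Suc (Suc (tdepth m))"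
    by (simp add: sum_list_triv)
  also have "\<dots> \<le> m * Suc (Suc (tdepth m))"
  proof (rule mult_le_mono1)
    show "length (filter (\<lambda>j'. j' \<noteq> snd a) [1..<m+1]) \<le> m"
      by (rule order_trans[OF length_filter_le]) (simp del: upt_Suc)
  qed
  finally show ?thesis unfolding verify_cost0 by linarith
qed

lemma alg_props:
  assumes v: "valid_input n m x" and j: "j \<in> {1..m}" and n: "n \<ge> 1"
  shows "qin (grid n m) (alg n m j) x \<and> cst (alg n m j) x \<le> (n + m) * (tdepth m + 5)
     \<and> (ev (alg n m j) x \<longleftrightarrow> good_col n m x j)"
proof -
  define cl where "cl = map (\<lambda>i. (i, j)) [1..<n+1]"
  define col where "col = map x cl"
  define ds where "ds = cands n col"
  have colg: "\<And>i. i \<in> {1..n} \<Longrightarrow> (i, j) \<in> grid n m" using j by (auto simp: grid_def)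
  have clg: "set cl \<subseteq> grid n m" unfolding cl_def using colg by (auto simp del: upt_Suc)
  have dsg: "set ds \<subseteq> grid n m"
  proof
    fix d assume "d \<in> set ds"
    then obtain s where s: "s \<in> set col" "bpoint s \<noteq> None" "d = the (bpoint s)"
      unfolding ds_def cands_def by auto
    then obtain c where c: "c \<in> set cl" "s = x c" unfolding col_def by auto
    have "valid_sym n m (x c)" using v clg c(1) unfolding valid_input_def by blast
    then show "d \<in> grid n m" using s c unfolding valid_sym_def by auto
  qed
  have "length ds \<le> length col" unfolding ds_def cands_def by simp
  then have dsl: "length ds \<le> n" by (simp add: col_def cl_def del: upt_Suc)
  define K where "K = 2 + Suc (tdepth m)"
  define I where "I = (\<lambda>st. \<forall>c. st = Some c \<longrightarrow> c \<in> grid n m)"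
  have fp: "cst (qfoldl (cmp m) None ds) x \<le> K * length ds \<and> qin (grid n m) (qfoldl (cmp m) None ds) x"
  proof (rule qfoldl_props[where I=I])
    fix st d assume "I st" "d \<in> set ds"
    then have dg: "d \<in> grid n m" using dsg by auto
    then have "snd d \<in> {1..m}" by (auto simp: grid_def)
    then have "cst (cmp m st d) x \<le> K" unfolding K_def using cmp_cost[of m st d x] Tpath_len[of "snd d" m] by linarith
    moreover have "qin (grid n m) (cmp m st d) x \<and> (\<forall>c. step m x st d = Some c \<longrightarrow> c \<in> grid n m)"
      using cmp_qin[OF v dg, of st] \<open>I st\<close> unfolding I_def by blast
    ultimately show "I (ev (cmp m st d) x) \<and> cst (cmp m st d) x \<le> K \<and> qin (grid n m) (cmp m st d) x"
      unfolding I_def cmp_ev by blast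
  qed (simp add: I_def)
  have fev: "ev (qfoldl (cmp m) None ds) x = foldl (step m x) None ds"
    unfolding qfoldl_ev cmp_ev by simp
  have finv: "inv n m x (foldl (step m x) None ds)" by (rule fold_inv[OF dsg]) (simp add: inv_def)
  have e1: "ev (qmap query cl) x = col" unfolding col_def qmap_props query_props by simp
  have q1: "qin (grid n m) (qmap query cl) x" using clg unfolding qmap_props query_props by blast
  have c1: "cst (qmap query cl) x = n" unfolding qmap_query_cst
    by (simp add: cl_def del: upt_Suc)
  have alg1: "alg n m j = bnd (qmap query cl) (rest n m j)" unfolding alg_def cl_def ..
  have rest1: "rest n m j col = bnd (qfoldl (cmp m) None ds) (fin n m j)" unfolding rest_def ds_def ..
  define ch where "ch = foldl (step m x) None ds"
  have alg_ev: "ev (alg n m j) x = ev (fin n m j ch) x"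
    unfolding alg1 bnd_props e1 rest1 fev ch_def ..
  have alg_cst: "cst (alg n m j) x = n + cst (qfoldl (cmp m) None ds) x + cst (fin n m j ch) x"
    unfolding alg1 bnd_props e1 rest1 fev c1 ch_def by simp
  have alg_qin: "qin (grid n m) (alg n m j) x = (qin (grid n m) (qmap query cl) x \<and>
      qin (grid n m) (qfoldl (cmp m) None ds) x \<and> qin (grid n m) (fin n m j ch) x)"
    unfolding alg1 bnd_props e1 rest1 fev ch_def by simp
  have chg: "\<And>a. ch = Some a \<Longrightarrow> a \<in> grid n m" using finv unfolding ch_def inv_def by blast
  have qf: "qin (grid n m) (fin n m j ch) x"
  proof (cases ch)
    case None then show ?thesis by (simp add: fin_def)
  next
    case (Some a) then show ?thesis using verify_qin[OF v chg[OF Some]] by (simp add: fin_def)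
  qed
  have qin: "qin (grid n m) (alg n m j) x" using alg_qin q1 fp qf by blast
  have vc: "cst (fin n m j ch) x \<le> n + m * (Suc (Suc (tdepth m)))"
  proof (cases ch)
    case None then show ?thesis by (simp add: fin_def)
  next
    case (Some a) then show ?thesis using verify_cost[OF chg[OF Some]] by (simp add: fin_def)
  qed
  have "cst (alg n m j) x \<le> n + K * n + (n + m * (Suc (Suc (tdepth m))))"
    using alg_cst fp vc mult_le_mono2[OF dsl, of K] by linarith
  also have "\<dots> \<le> (n + m) * (tdepth m + 5)" unfolding K_def by (simp add: algebra_simps)
  finally have cost: "cst (alg n m j) x \<le> (n + m) * (tdepth m + 5)" .
  have corr: "ev (alg n m j) x \<longleftrightarrow> good_col n m x j"
  proof
    assume h: "ev (alg n m j) x"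
    show "good_col n m x j"
    proof (cases ch)
      case None then show ?thesis using h alg_ev by (simp add: fin_def)
    next
      case (Some a)
      then have "ev (verify n m j a) x" using h alg_ev by (simp add: fin_def)
      then show ?thesis using verify_ev[OF v chg[OF Some]] unfolding good_col_def by blast
    qed
  next
    assume "good_col n m x j"
    then obtain b a where gc: "g_conds n m x b a" and jg: "j \<in> Gset m x b a" unfolding good_col_def by blast
    have jb: "j \<in> {1..m} - {b}" and bp: "bpoint (x (the (follow x a (Tpath m j)))) = Some a"
      using jg by (auto simp: Gset_def)
    have P3: "\<forall>j'\<in>{1..m}-{b}. \<exists>l. follow x a (Tpath m j') = Some l \<and> snd l = j' \<and> \<not> val (x l)"
      using gc unfolding g_conds_def by (elim conjE) assumption
    have ab: "a \<in> {1..n} \<times> {b}"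
      using gc unfolding g_conds_def by (elim conjE) assumption
    have bm: "b \<in> {1..m}"
      using gc unfolding g_conds_def by (elim conjE) assumption
    obtain l where l: "follow x a (Tpath m j) = Some l" "snd l = j"
      using P3 jb by blast
    have ag: "a \<in> grid n m" "snd a = b" using ab bm by (auto simp: grid_def)
    have "l \<in> grid n m" using follow_grid[OF v ag(1) l(1)] .
    then have li: "fst l \<in> {1..n}" "l = (fst l, j)" using l by (auto simp: grid_def)
    then have "l \<in> set cl" unfolding cl_def by (auto simp del: upt_Suc intro!: image_eqI[where x="fst l"])
    then have "x l \<in> set col" unfolding col_def by simp
    then have "a \<in> set ds" using bp l unfolding ds_def cands_def by (auto intro!: image_eqI[where x="x l"])
    then have cha: "ch = Some a"
      using fold_keep[OF gc v dsg] unfolding ch_def by (simp add: inv_def)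
    have "ev (verify n m j a) x" using verify_ev[OF v ag(1)] unfolding ag(2) using gc jg by blast
    then show "ev (alg n m j) x" unfolding alg_ev fin_def cha by simp
  qed
  show ?thesis by (intro conjI qin cost corr)
qed

theorem lemma13:
  "\<exists>(C::real) (k::nat). \<forall>n m. n \<ge> 1 \<longrightarrow> m \<ge> 1 \<longrightarrow> even m \<longrightarrow>
     (\<forall>j\<in>{1..m}. \<exists>A::qalg.
        (\<forall>x. valid_input n m x \<longrightarrow>
           queries_in (grid n m) A x \<and>
           real (nqueries A x) \<le> C * real (n + m) * (log 2 (real (n + m))) ^ k \<and>
           (run A x \<longleftrightarrow> good_col n m x j)))"
proof (rule exI[of _ "6::real"], rule exI[of _ "1::nat"], intro allI impI ballI)
  fix n m j :: nat assume n: "n \<ge> 1" and m: "m \<ge> 1" and "even m" and j: "j \<in> {1..m}"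
  show "\<exists>A::qalg. \<forall>x. valid_input n m x \<longrightarrow>
           queries_in (grid n m) A x \<and>
           real (nqueries A x) \<le> 6 * real (n + m) * (log 2 (real (n + m))) ^ 1 \<and>
           (run A x \<longleftrightarrow> good_col n m x j)"
  proof (intro exI[of _ "toq (alg n m j)"] allI impI)
    fix x assume v: "valid_input n m x"
    note ap = alg_props[OF v j n]
    define L where "L = log 2 (real (n + m))"
    have L1: "L \<ge> 1" unfolding L_def using n m by simp
    have tL: "real (tdepth m) \<le> L" unfolding L_def by (rule tdepth_log) (use m in auto)
    have "real (cst (alg n m j) x) \<le> real ((n + m) * (tdepth m + 5))" using ap by linarith
    also have "\<dots> = real (n + m) * (real (tdepth m) + 5)" by simp
    also have "\<dots> \<le> real (n + m) * (6 * L)"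
      by (rule mult_left_mono) (use tL L1 in auto)
    finally have "real (cst (alg n m j) x) \<le> 6 * real (n + m) * L ^ 1" by (simp add: algebra_simps)
    then show "queries_in (grid n m) (toq (alg n m j)) x \<and>
           real (nqueries (toq (alg n m j)) x) \<le> 6 * real (n + m) * (log 2 (real (n + m))) ^ 1 \<and>
           (run (toq (alg n m j)) x \<longleftrightarrow> good_col n m x j)"
      using ap unfolding L_def by (simp add: toq_props)
  qed
qed

end
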